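(* Let $T$ be a monoid and $Y$ a semilattice, and let $\cdot$ be a left partial action of $T$ on $Y$ satisfying axioms (A), (B), (C), with corresponding map $\varphi\colon T\to\mathcal{I}(Y)$, $t\mapsto\varphi_t$. The following are equivalent: (1) $M(T,Y)$ is an $F$-restriction monoid; (2) $\mathrm{dom}(\varphi_t)$ is a principal order ideal of $Y$ for every $t\in T$; (3) the image of $\varphi$ is contained in the Munn semigroup $T_Y$ of $Y$.
   Context: A left partial action of $T$ on $Y$ is a partial map $(t,y)\mapsto t\cdot y$ with $1\cdot y=y$ always defined and such that if $t\cdot y$ and $s\cdot(t\cdot y)$ are defined then $(st)\cdot y$ is defined and equals $s\cdot(t\cdot y)$. $\varphi_t$ is the partial injection $y\mapsto t\cdot y$; $\mathcal{I}(Y)$ is the monoid of partial injections of $Y$. Axioms: (A) $\mathrm{dom}\varphi_t$, $\mathrm{ran}\varphi_t$ are order ideals of $Y$; (B) $\varphi_t$ is an order-isomorphism from $\mathrm{dom}\varphi_t$ onto $\mathrm{ran}\varphi_t$; (C) $\mathrm{dom}\varphi_t\neq\varnothing$. Reverse right partial action: $y\circ t$ is defined iff $y\in\mathrm{ran}\varphi_t$, with $y\circ t=\varphi_t^{-1}(y)$. $M(T,Y)=\{(y,t)\in Y\times T\colon y\circ t\text{ defined}\}$ with $(x,s)(y,t)=(s\cdot((x\circ s)\wedge y),st)$, $(y,t)^*=(y\circ t,1)$, $(y,t)^+=(y,1)$; it is a restriction semigroup with projections $\{(y,1)\}$. A restriction semigroup is $F$-restriction if each class of the least congruence $\sigma$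 identifying all projections has a maximum element in the natural order ($a\le b$ iff $a=eb$ for a projection $e$). The Munn semigroup $T_Y$ is the inverse semigroup of all order-isomorphisms between principal order ideals of $Y$. *)

theory Defs
  imports Main
begin

(* A partial map  'y => 'y option  represents an element of I(Y). *)

definition order_ideal :: "'y::order set \<Rightarrow> bool" where
  "order_ideal I \<longleftrightarrow> (\<forall>x y. y \<in> I \<longrightarrow> x \<le> y \<longrightarrow> x \<in> I)"

definition principal_order_ideal :: "'y::order set \<Rightarrow> bool" where
  "principal_order_ideal I \<longleftrightarrow> (\<exists>a. I = {x. x \<le> a})"

definition order_iso_partial :: "('y::order \<Rightarrow> 'y option) \<Rightarrow> bool" where
  "order_iso_partial f \<longleftrightarrow>
     (\<forall>x\<in>dom f. \<forall>y\<in>dom f. x \<le> y \<longleftrightarrow> the (f x) \<le> the (f y))"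

(* left partial action of the monoid T on Y; act t y = Some (t . y) when defined *)
definition left_partial_action :: "('t::monoid_mult \<Rightarrow> 'y \<Rightarrow> 'y option) \<Rightarrow> bool" where
  "left_partial_action act \<longleftrightarrow>
     (\<forall>y. act 1 y = Some y) \<and>
     (\<forall>s t y z w. act t y = Some z \<longrightarrow> act s z = Some w \<longrightarrow> act (s * t) y = Some w)"

definition axiom_A :: "('t \<Rightarrow> 'y::order \<Rightarrow> 'y option) \<Rightarrow> bool" where
  "axiom_A act \<longleftrightarrow> (\<forall>t. order_ideal (dom (act t)) \<and> order_ideal (ran (act t)))"

definition axiom_B :: "('t \<Rightarrow> 'y::order \<Rightarrow> 'y option) \<Rightarrow> bool" where
  "axiom_B act \<longleftrightarrow> (\<forall>t. order_iso_partial (act t))"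

definition axiom_C :: "('t \<Rightarrow> 'y \<Rightarrow> 'y option) \<Rightarrow> bool" where
  "axiom_C act \<longleftrightarrow> (\<forall>t. dom (act t) \<noteq> {})"

(* reverse right partial action: y o t = phi_t^{-1}(y), meaningful for y \<in> ran phi_t *)
definition rev_act :: "('t \<Rightarrow> 'y \<Rightarrow> 'y option) \<Rightarrow> 'y \<Rightarrow> 't \<Rightarrow> 'y" where
  "rev_act act y t = (THE x. act t x = Some y)"

definition M_carrier :: "('t \<Rightarrow> 'y \<Rightarrow> 'y option) \<Rightarrow> ('y \<times> 't) set" where
  "M_carrier act = {(y, t). y \<in> ran (act t)}"

definition M_mult :: "('t::monoid_mult \<Rightarrow> 'y::semilattice_inf \<Rightarrow> 'y option)
    \<Rightarrow> 'y \<times> 't \<Rightarrow> 'y \<times> 't \<Rightarrow> 'y \<times> 't" where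
  "M_mult act a b = (case a of (x, s) \<Rightarrow> case b of (y, t) \<Rightarrow>
      (the (act s (inf (rev_act act x s) y)), s * t))"

definition M_proj :: "('t::monoid_mult \<Rightarrow> 'y \<Rightarrow> 'y option) \<Rightarrow> ('y \<times> 't) set" where
  "M_proj act = {(y, 1) | y. True}"

(* Generic notions for a semigroup given by a carrier S, multiplication m and
   a set P of projections. *)

definition natural_le :: "'a set \<Rightarrow> ('a \<Rightarrow> 'a \<Rightarrow> 'a) \<Rightarrow> 'a \<Rightarrow> 'a \<Rightarrow> bool" where
  "natural_le P m a b \<longleftrightarrow> (\<exists>e\<in>P. a = m e b)"

definition congruence_on :: "'a set \<Rightarrow> ('a \<Rightarrow> 'a \<Rightarrow> 'a) \<Rightarrow> 'a rel \<Rightarrow> bool" where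
  "congruence_on S m R \<longleftrightarrow> equiv S R \<and>
     (\<forall>a b c. (a, b) \<in> R \<longrightarrow> c \<in> S \<longrightarrow> (m c a, m c b) \<in> R \<and> (m a c, m b c) \<in> R)"

definition sigma_cong :: "'a set \<Rightarrow> ('a \<Rightarrow> 'a \<Rightarrow> 'a) \<Rightarrow> 'a set \<Rightarrow> 'a rel" where
  "sigma_cong S m P = \<Inter> {R. congruence_on S m R \<and> P \<times> P \<subseteq> R}"

definition F_restriction_monoid :: "'a set \<Rightarrow> ('a \<Rightarrow> 'a \<Rightarrow> 'a) \<Rightarrow> 'a set \<Rightarrow> bool" where
  "F_restriction_monoid S m P \<longleftrightarrow>
     (\<exists>e\<in>S. \<forall>a\<in>S. m e a = a \<and> m a e = a) \<and>
     (\<forall>a\<in>S. \<exists>u\<in>S. (a, u) \<in> sigma_cong S m P \<and>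
        (\<forall>b\<in>S. (a, b) \<in> sigma_cong S m P \<longrightarrow> natural_le P m b u))"

definition munn :: "('y::order \<Rightarrow> 'y option) set" where
  "munn = {f. principal_order_ideal (dom f) \<and> principal_order_ideal (ran f) \<and> order_iso_partial f}"

end

theory Submission
  imports Defs
begin

locale lpa =
  fixes act :: "'t::monoid_mult \<Rightarrow> 'y::semilattice_inf \<Rightarrow> 'y option"
  assumes lpa: "left_partial_action act" and axA: "axiom_A act"
    and axB: "axiom_B act" and axC: "axiom_C act"
begin

lemma act1: "act 1 y = Some y"
  using lpa unfolding left_partial_action_def by blast

lemma comp: "act t y = Some z \<Longrightarrow> act s z = Some w \<Longrightarrow> act (s * t) y = Some w"
  using lpa unfolding left_partial_action_def by blast

lemma dom_ideal: "x \<in> dom (act t) \<Longrightarrow> x' \<le> x \<Longrightarrow> x' \<in> dom (act t)"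
  using axA unfolding axiom_A_def order_ideal_def by blast

lemma ran_ideal: "x \<in> ran (act t) \<Longrightarrow> x' \<le> x \<Longrightarrow> x' \<in> ran (act t)"
  using axA unfolding axiom_A_def order_ideal_def by blast

lemma iso: "act t x = Some z \<Longrightarrow> act t x' = Some z' \<Longrightarrow> (x \<le> x' \<longleftrightarrow> z \<le> z')"
  using axB unfolding axiom_B_def order_iso_partial_def
  by (metis domI option.sel)

lemma inj: "act t x = Some z \<Longrightarrow> act t x' = Some z \<Longrightarrow> x = x'"
  using iso[of t x z x' z] iso[of t x' z x z] by (simp add: order_antisym)

lemma rev_eq: "act t x = Some y \<Longrightarrow> rev_act act y t = x"
  unfolding rev_act_def using inj by blast

lemma rev_ran: "y \<in> ran (act t) \<Longrightarrow> act t (rev_act act y t) = Some y"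
  unfolding ran_def using rev_eq by auto

lemma mult_proj: "M_mult act (e, 1) (y, t) = (inf e y, t)"
  unfolding M_mult_def using rev_eq[OF act1[of e]] act1 by simp

lemma closed:
  assumes "(x, s) \<in> M_carrier act" "(y, t) \<in> M_carrier act"
  shows "M_mult act (x, s) (y, t) \<in> M_carrier act"
proof -
  let ?v = "inf (rev_act act x s) y"
  have xr: "act s (rev_act act x s) = Some x" using assms(1) rev_ran by (auto simp: M_carrier_def)
  have vd: "?v \<in> dom (act s)" using dom_ideal[of "rev_act act x s" s ?v] xr by auto
  then obtain w where w: "act s ?v = Some w" by auto
  have "?v \<in> ran (act t)" using ran_ideal[of y t ?v] assms(2) by (auto simp: M_carrier_def)
  then obtain q where q: "act t q = Some ?v" by (auto simp: ran_def)
  have "act (s * t) q = Some w" using comp[OF q w] .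
  then show ?thesis using w by (auto simp: M_mult_def M_carrier_def ran_def)
qed

definition K where "K = {(a, b). a \<in> M_carrier act \<and> b \<in> M_carrier act \<and> snd a = snd b}"

lemma proj_in: "(y, 1) \<in> M_carrier act"
  using act1 by (auto simp: M_carrier_def ran_def)

lemma K_cong: "congruence_on (M_carrier act) (M_mult act) K \<and> M_proj act \<times> M_proj act \<subseteq> K"
proof -
  have "equiv (M_carrier act) K"
    unfolding equiv_def refl_on_def sym_def trans_def K_def by auto
  moreover have "(M_mult act c a, M_mult act c b) \<in> K \<and> (M_mult act a c, M_mult act b c) \<in> K"
    if "(a, b) \<in> K" "c \<in> M_carrier act" for a b c
    using that closed unfolding K_def by (auto simp: M_mult_def split: prod.splits)
  moreover have "M_proj act \<times> M_proj act \<subseteq> K"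
    using proj_in by (auto simp: K_def M_proj_def)
  ultimately show ?thesis unfolding congruence_on_def by blast
qed

lemma sigma_eq: "sigma_cong (M_carrier act) (M_mult act) (M_proj act) = K"
proof
  show "sigma_cong (M_carrier act) (M_mult act) (M_proj act) \<subseteq> K"
    unfolding sigma_cong_def using K_cong by blast
next
  show "K \<subseteq> sigma_cong (M_carrier act) (M_mult act) (M_proj act)"
  proof
    fix p assume "p \<in> K"
    then obtain x y s where p: "p = ((x, s), (y, s))" and xs: "(x, s) \<in> M_carrier act"
      and ys: "(y, s) \<in> M_carrier act" by (auto simp: K_def)
    show "p \<in> sigma_cong (M_carrier act) (M_mult act) (M_proj act)"
      unfolding sigma_cong_def
    proof
      fix R assume "R \<in> {R. congruence_on (M_carrier act) (M_mult act) R \<and> M_proj act \<times> M_proj act \<subseteq> R}"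
      then have cg: "congruence_on (M_carrier act) (M_mult act) R" and PR: "M_proj act \<times> M_proj act \<subseteq> R"
        by auto
      have eq: "equiv (M_carrier act) R" using cg by (simp add: congruence_on_def)
      have c1: "((x, 1), (y, 1)) \<in> R" "((y, 1), (x, 1)) \<in> R" using PR by (auto simp: M_proj_def)
      have "(M_mult act (x, 1) (y, s), M_mult act (y, 1) (y, s)) \<in> R"
        using cg c1 ys unfolding congruence_on_def by blast
      then have r1: "((inf x y, s), (y, s)) \<in> R" by (simp add: mult_proj)
      have "(M_mult act (y, 1) (x, s), M_mult act (x, 1) (x, s)) \<in> R"
        using cg c1 xs unfolding congruence_on_def by blast
      then have r2: "((inf x y, s), (x, s)) \<in> R" by (simp add: mult_proj inf_commute)
      show "p \<in> R" using r1 r2 eq unfolding p equiv_def sym_def trans_def by blast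
    qed
  qed
qed

lemma nat_le:
  assumes "(u, t) \<in> M_carrier act"
  shows "natural_le (M_proj act) (M_mult act) (b, t') (u, t) \<longleftrightarrow> t' = t \<and> b \<le> u"
  unfolding natural_le_def M_proj_def using mult_proj
  by (auto simp: inf_absorb1) (metis inf.absorb1 mult_proj)

lemma dom_ran_max:
  "principal_order_ideal (dom (act t)) \<longleftrightarrow> (\<exists>m\<in>ran (act t). \<forall>z\<in>ran (act t). z \<le> m)"
proof
  assume "principal_order_ideal (dom (act t))"
  then obtain a where a: "dom (act t) = {x. x \<le> a}" by (auto simp: principal_order_ideal_def)
  then obtain ma where ma: "act t a = Some ma" by auto
  have "\<forall>z\<in>ran (act t). z \<le> ma"
  proof
    fix z assume "z \<in> ran (act t)"
    then obtain x where x: "act t x = Some z" by (auto simp: ran_def)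
    then have "x \<le> a" using a by auto
    then show "z \<le> ma" using iso[OF x ma] by simp
  qed
  then show "\<exists>m\<in>ran (act t). \<forall>z\<in>ran (act t). z \<le> m" using ma by (auto simp: ran_def)
next
  assume "\<exists>m\<in>ran (act t). \<forall>z\<in>ran (act t). z \<le> m"
  then obtain m a where a: "act t a = Some m" and mx: "\<forall>z\<in>ran (act t). z \<le> m"
    by (auto simp: ran_def)
  have "dom (act t) = {x. x \<le> a}"
  proof
    show "dom (act t) \<subseteq> {x. x \<le> a}"
    proof
      fix x assume "x \<in> dom (act t)"
      then obtain z where z: "act t x = Some z" by auto
      then have "z \<le> m" using mx by (auto simp: ran_def)
      then show "x \<in> {x. x \<le> a}" using iso[OF z a] by simp
    qed
    show "{x. x \<le> a} \<subseteq> dom (act t)" using dom_ideal[of a t] a by auto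
  qed
  then show "principal_order_ideal (dom (act t))" by (auto simp: principal_order_ideal_def)
qed

lemma part2: "(\<forall>t. principal_order_ideal (dom (act t))) \<longleftrightarrow> range act \<subseteq> munn"
proof
  assume h: "\<forall>t. principal_order_ideal (dom (act t))"
  show "range act \<subseteq> munn"
  proof
    fix f assume "f \<in> range act"
    then obtain t where f: "f = act t" by auto
    obtain m where m: "m \<in> ran (act t)" "\<forall>z\<in>ran (act t). z \<le> m"
      using h dom_ran_max by blast
    have "ran (act t) = {z. z \<le> m}" using m ran_ideal[of m t] by auto
    then show "f \<in> munn" using h axB f
      unfolding munn_def axiom_B_def principal_order_ideal_def by auto
  qed
next
  assume "range act \<subseteq> munn"
  then show "\<forall>t. principal_order_ideal (dom (act t))" by (auto simp: munn_def)
qed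

lemma part1: "F_restriction_monoid (M_carrier act) (M_mult act) (M_proj act)
            \<longleftrightarrow> (\<forall>t. principal_order_ideal (dom (act t)))"
proof
  assume F: "F_restriction_monoid (M_carrier act) (M_mult act) (M_proj act)"
  show "\<forall>t. principal_order_ideal (dom (act t))"
  proof
    fix t
    obtain x where "x \<in> dom (act t)" using axC unfolding axiom_C_def by blast
    then obtain y where y: "act t x = Some y" by auto
    then have a: "(y, t) \<in> M_carrier act" by (auto simp: M_carrier_def ran_def)
    then obtain u where u: "u \<in> M_carrier act" "((y, t), u) \<in> K"
      and ub: "\<forall>b\<in>M_carrier act. ((y, t), b) \<in> K \<longrightarrow> natural_le (M_proj act) (M_mult act) b u"
      using F unfolding F_restriction_monoid_def sigma_eq by blast
    obtain u1 where u1: "u = (u1, t)" using u by (cases u) (auto simp: K_def)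
    have "\<forall>z\<in>ran (act t). z \<le> u1"
    proof
      fix z assume z: "z \<in> ran (act t)"
      then have "(z, t) \<in> M_carrier act" by (auto simp: M_carrier_def)
      then have "natural_le (M_proj act) (M_mult act) (z, t) u" using ub a by (auto simp: K_def)
      then show "z \<le> u1" using nat_le u u1 by auto
    qed
    moreover have "u1 \<in> ran (act t)" using u u1 by (auto simp: M_carrier_def)
    ultimately show "principal_order_ideal (dom (act t))" using dom_ran_max by blast
  qed
next
  assume h: "\<forall>t. principal_order_ideal (dom (act t))"
  obtain top where top: "dom (act 1) = {x. x \<le> top}" using h unfolding principal_order_ideal_def by blast
  have topge: "x \<le> top" for x using top act1[of x] by auto
  have ident: "\<exists>e\<in>M_carrier act. \<forall>a\<in>M_carrier act. M_mult act e a = a \<and> M_mult act a e = a"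
  proof (intro bexI ballI conjI)
    show "(top, 1) \<in> M_carrier act" by (rule proj_in)
    fix a assume a: "a \<in> M_carrier act"
    obtain x s where as: "a = (x, s)" by (cases a)
    show "M_mult act (top, 1) a = a" using as topge by (simp add: mult_proj inf_absorb2)
    have "act s (rev_act act x s) = Some x" using a as rev_ran by (auto simp: M_carrier_def)
    then show "M_mult act a (top, 1) = a" using as topge by (simp add: M_mult_def inf_absorb1)
  qed
  have "\<exists>u\<in>M_carrier act. (a, u) \<in> K \<and> (\<forall>b\<in>M_carrier act. (a, b) \<in> K \<longrightarrow> natural_le (M_proj act) (M_mult act) b u)"
    if a: "a \<in> M_carrier act" for a
  proof -
    obtain x s where as: "a = (x, s)" by (cases a)
    obtain m where m: "m \<in> ran (act s)" "\<forall>z\<in>ran (act s). z \<le> m"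
      using h dom_ran_max by blast
    have um: "(m, s) \<in> M_carrier act" using m by (auto simp: M_carrier_def)
    show ?thesis
    proof (intro bexI conjI ballI impI)
      show "(a, (m, s)) \<in> K" using a as um by (auto simp: K_def)
      fix b assume "b \<in> M_carrier act" "(a, b) \<in> K"
      then obtain b1 where "b = (b1, s)" "b1 \<in> ran (act s)" using as
        by (cases b) (auto simp: K_def M_carrier_def)
      then show "natural_le (M_proj act) (M_mult act) b (m, s)" using nat_le[OF um] m by auto
    qed (rule um)
  qed
  then show "F_restriction_monoid (M_carrier act) (M_mult act) (M_proj act)"
    using ident unfolding F_restriction_monoid_def sigma_eq by blast
qed

end

theorem lemma3p5:
  fixes act :: "'t::monoid_mult \<Rightarrow> 'y::semilattice_inf \<Rightarrow> 'y option"
  assumes "left_partial_action act"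
    and "axiom_A act" and "axiom_B act" and "axiom_C act"
  shows "(F_restriction_monoid (M_carrier act) (M_mult act) (M_proj act)
            \<longleftrightarrow> (\<forall>t. principal_order_ideal (dom (act t))))
       \<and> ((\<forall>t. principal_order_ideal (dom (act t))) \<longleftrightarrow> range act \<subseteq> munn)"
proof -
  interpret lpa act using assms by (unfold_locales)
  show ?thesis using part1 part2 by blast
qed

end
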